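(* Let $\phi\colon\mathbb{N}\to(0,\infty)$ be a non-decreasing function. (1) If $\sum_{n=1}^\infty\frac{1}{\phi(n)}<\infty$, then for Lebesgue almost all $x\in(0,1)$, $\limsup_{n\to\infty}\frac{M_n(x)}{\phi(n)}=0$. (2) If $\sum_{n=1}^\infty\frac{1}{\phi(n)}=\infty$, then for Lebesgue almost all $x\in(0,1)$, $\limsup_{n\to\infty}\frac{M_n(x)}{\phi(n)}=\infty$.
   Context: Signed Engel expansion: define $T\colon[0,1)\to[0,1)$ by: for $k\in\mathbb{N}$, $Tx=\lceil 1/x\rceil x-1$ if $x\in(\frac{1}{2k},\frac{1}{2k-1})$; $Tx=1-\lfloor 1/x\rfloor x$ if $x\in(\frac{1}{2k+1},\frac{1}{2k})$; $Tx=0$ if $x\in\{0\}\cup\{1/n\colon n\ge 2\}$. For $x\in(0,1)$, $d_1(x)=\lceil 1/x\rceil$ if $x\in[\frac{1}{2k},\frac{1}{2k-1})$ for some $k\in\mathbb{N}$, and $d_1(x)=\lfloor 1/x\rfloor$ if $x\in[\frac{1}{2k+1},\frac{1}{2k})$ for some $k\in\mathbb{N}$; $d_{n+1}(x)=d_1(T^nx)$. For irrational $x\in(0,1)$, $R_1(x)=d_1(x)$, $R_n(x)=d_n(x)/d_{n-1}(x)$ for $n\ge2$, and $M_n(x)=\max\{R_k(x)\colon 1\le k\le n\}$. *)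

theory Defs
  imports "HOL-Analysis.Analysis"
begin

text \<open>The signed Engel map T on [0,1) (values outside [0,1) are irrelevant).\<close>
definition sE_T :: "real \<Rightarrow> real" where
  "sE_T x =
    (if x = 0 \<or> (\<exists>n::nat. n \<ge> 2 \<and> x = 1 / real n) then 0
     else if (\<exists>k::nat. k \<ge> 1 \<and> 1 / (2 * real k) < x \<and> x < 1 / (2 * real k - 1))
       then real_of_int \<lceil>1 / x\<rceil> * x - 1
     else 1 - real_of_int \<lfloor>1 / x\<rfloor> * x)"

definition sE_d1 :: "real \<Rightarrow> int" where
  "sE_d1 x =
    (if \<exists>k::nat. k \<ge> 1 \<and> 1 / (2 * real k) \<le> x \<and> x < 1 / (2 * real k - 1)
     then \<lceil>1 / x\<rceil> else \<lfloor>1 / x\<rfloor>)"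

text \<open>Digits d_n(x), n \<ge> 1: d_(n+1)(x) = d_1(T^n x).  (d_0 is a dummy.)\<close>
definition sE_d :: "nat \<Rightarrow> real \<Rightarrow> int" where
  "sE_d n x = sE_d1 ((sE_T ^^ (n - 1)) x)"

definition sE_R :: "nat \<Rightarrow> real \<Rightarrow> real" where
  "sE_R n x = (if n \<le> 1 then real_of_int (sE_d 1 x)
               else real_of_int (sE_d n x) / real_of_int (sE_d (n - 1) x))"

definition sE_M :: "nat \<Rightarrow> real \<Rightarrow> real" where
  "sE_M n x = Max {sE_R k x | k. 1 \<le> k \<and> k \<le> n}"

end

theory Submission
  imports Defs
begin

definition Br :: "nat \<Rightarrow> bool \<Rightarrow> real set" where
  "Br k b = (if b then {1/(2*real k)<..<1/(2*real k - 1)} else {1/(2*real k+1)<..<1/(2*real k)})"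

lemma recip_bounds:
  assumes "k \<ge> 1" "z \<in> Br k b"
  shows "z > 0" "b \<Longrightarrow> 2*real k - 1 < 1/z \<and> 1/z < 2*real k"
        "\<not> b \<Longrightarrow> 2*real k < 1/z \<and> 1/z < 2*real k + 1"
proof -
  have k: "real k \<ge> 1" using assms by simp
  show "z > 0" using assms k by (auto simp: Br_def split: if_splits intro: less_trans[rotated])
  show "b \<Longrightarrow> 2*real k - 1 < 1/z \<and> 1/z < 2*real k"
    using assms k by (auto simp: Br_def field_simps)
  show "\<not> b \<Longrightarrow> 2*real k < 1/z \<and> 1/z < 2*real k + 1"
    using assms k by (auto simp: Br_def field_simps)
qed

definition aff :: "nat \<Rightarrow> bool \<Rightarrow> real \<Rightarrow> real" where
  "aff k b z = (if b then 2*real k*z - 1 else 1 - 2*real k*z)"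

lemma not_recip_nat:
  assumes "real m < 1/z" "1/z < real m + 1" shows "\<not>(\<exists>n::nat. n \<ge> 2 \<and> z = 1 / real n)"
proof
  assume "\<exists>n::nat. n \<ge> 2 \<and> z = 1 / real n"
  then obtain n::nat where "n \<ge> 2" "z = 1/real n" by blast
  then have "1/z = real n" by simp
  with assms have "m < n" "n < m + 1" by linarith+
  then show False by simp
qed

lemma branch_facts:
  assumes k: "k \<ge> 1" and z: "z \<in> Br k b"
  shows "sE_T z = aff k b z" "sE_d1 z = 2 * int k"
proof -
  have zp: "z > 0" using recip_bounds[OF k z] by simp
  have kr: "real k \<ge> 1" using k by simp
  show "sE_T z = aff k b z"
  proof (cases b)
    case True
    then have b: "2*real k - 1 < 1/z" "1/z < 2*real k" using recip_bounds[OF k z] by auto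
    have n0: "\<not>(\<exists>n::nat. n \<ge> 2 \<and> z = 1 / real n)"
      by (rule not_recip_nat[of "2*k-1"]) (use b k in \<open>auto simp: of_nat_diff\<close>)
    have ex: "\<exists>k'::nat. k' \<ge> 1 \<and> 1 / (2 * real k') < z \<and> z < 1 / (2 * real k' - 1)"
      using z True k by (auto simp: Br_def)
    have c: "\<lceil>1/z\<rceil> = 2 * int k" using b by (simp add: ceiling_eq_iff)
    show ?thesis unfolding sE_T_def aff_def using n0 ex zp True c by auto
  next
    case False
    then have b: "2*real k < 1/z" "1/z < 2*real k + 1" using recip_bounds[OF k z] by auto
    have n0: "\<not>(\<exists>n::nat. n \<ge> 2 \<and> z = 1 / real n)"
      by (rule not_recip_nat[of "2*k"]) (use b k in \<open>auto\<close>)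
    have ex: "\<not>(\<exists>k'::nat. k' \<ge> 1 \<and> 1 / (2 * real k') < z \<and> z < 1 / (2 * real k' - 1))"
    proof
      assume "\<exists>k'::nat. k' \<ge> 1 \<and> 1 / (2 * real k') < z \<and> z < 1 / (2 * real k' - 1)"
      then obtain k'::nat where k': "k' \<ge> 1" "1 / (2 * real k') < z" "z < 1 / (2 * real k' - 1)" by blast
      have "real k' \<ge> 1" using k' by simp
      then have "2*real k' - 1 < 1/z" "1/z < 2*real k'" using k' zp by (auto simp: field_simps)
      with b have "real k' < real k + 1" "real k < real k'" by linarith+
      then have "k' < Suc k" "k < k'" by simp_all
      then show False by simp
    qed
    have c: "\<lfloor>1/z\<rfloor> = 2 * int k" using b by (simp add: floor_eq_iff)
    show ?thesis unfolding sE_T_def aff_def using n0 ex zp False c by auto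
  qed
  show "sE_d1 z = 2 * int k"
  proof (cases b)
    case True
    then have b: "2*real k - 1 < 1/z" "1/z < 2*real k" using recip_bounds[OF k z] by auto
    have ex: "\<exists>k'::nat. k' \<ge> 1 \<and> 1 / (2 * real k') \<le> z \<and> z < 1 / (2 * real k' - 1)"
      using z True k by (auto simp: Br_def)
    have c: "\<lceil>1/z\<rceil> = 2 * int k" using b by (simp add: ceiling_eq_iff)
    show ?thesis unfolding sE_d1_def using ex c by auto
  next
    case False
    then have b: "2*real k < 1/z" "1/z < 2*real k + 1" using recip_bounds[OF k z] by auto
    have ex: "\<not>(\<exists>k'::nat. k' \<ge> 1 \<and> 1 / (2 * real k') \<le> z \<and> z < 1 / (2 * real k' - 1))"
    proof
      assume "\<exists>k'::nat. k' \<ge> 1 \<and> 1 / (2 * real k') \<le> z \<and> z < 1 / (2 * real k' - 1)"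
      then obtain k'::nat where k': "k' \<ge> 1" "1 / (2 * real k') \<le> z" "z < 1 / (2 * real k' - 1)" by blast
      have "real k' \<ge> 1" using k' by simp
      then have "2*real k' - 1 < 1/z" "1/z \<le> 2*real k'" using k' zp by (auto simp: field_simps)
      with b have "real k' < real k + 1" "real k < real k'" by linarith+
      then have "k' < Suc k" "k < k'" by simp_all
      then show False by simp
    qed
    have c: "\<lfloor>1/z\<rfloor> = 2 * int k" using b by (simp add: floor_eq_iff)
    show ?thesis unfolding sE_d1_def using ex c by auto
  qed
qed

lemma sE_T_alt: "sE_T = (\<lambda>x. if x \<in> {0} \<union> (\<lambda>n. 1 / real n) ` {2..} then 0
   else if x \<in> (\<Union>k\<in>{1..}. {1/(2*real k)<..<1/(2*real k - 1)}) then real_of_int \<lceil>1 / x\<rceil> * x - 1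
   else 1 - real_of_int \<lfloor>1 / x\<rfloor> * x)"
proof -
  have a: "\<And>x. (x \<in> {0} \<union> (\<lambda>n. 1 / real n) ` {2..}) = (x = 0 \<or> (\<exists>n::nat. n \<ge> 2 \<and> x = 1/real n))"
    by auto
  have b: "\<And>x. (x \<in> (\<Union>k\<in>{1..}. {1/(2*real k)<..<1/(2*real k - 1)})) =
     (\<exists>k::nat. k \<ge> 1 \<and> 1 / (2 * real k) < x \<and> x < 1 / (2 * real k - 1))"
    by auto
  show ?thesis unfolding sE_T_def by (simp only: a b)
qed

lemma sE_T_meas[measurable]: "sE_T \<in> borel_measurable borel"
proof -
  have s0: "{0} \<union> (\<lambda>n. 1 / real n) ` {2..} \<in> sets borel"
    by (rule sets.countable[where A="{0} \<union> (\<lambda>n. 1 / real n) ` {2..}"]) auto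
  have s1: "(\<Union>k\<in>{1..}. {1/(2*real k)<..<1/(2*real k - 1)}) \<in> sets borel"
    by (rule borel_open, rule open_UN, simp)
  show ?thesis unfolding sE_T_alt
    apply (intro measurable_If_set)
    apply (simp_all only: s0 s1 space_borel Int_UNIV_right)
    apply measurable
    done
qed

lemma sE_d1_alt: "(\<lambda>x. real_of_int (sE_d1 x)) = (\<lambda>x. if x \<in> (\<Union>k\<in>{1..}. {1/(2*real k)..<1/(2*real k - 1)}) then real_of_int \<lceil>1 / x\<rceil>
   else real_of_int \<lfloor>1 / x\<rfloor>)"
  unfolding sE_d1_def by (intro ext) auto

lemma sE_d1_meas[measurable]: "(\<lambda>x. real_of_int (sE_d1 x)) \<in> borel_measurable borel"
proof -
  have s1: "(\<Union>k\<in>{1..}. {1/(2*real k)..<1/(2*real k - 1)}) \<in> sets borel"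
    by (rule sets.countable_UN') auto
  show ?thesis unfolding sE_d1_alt
    apply (intro measurable_If_set)
    apply (simp_all only: s1 space_borel Int_UNIV_right)
    apply measurable
    done
qed

lemma in_branch:
  assumes "0 < z" "z < 1" "\<And>n::nat. z \<noteq> 1 / real n"
  shows "\<exists>k\<ge>1. \<exists>b. z \<in> Br k b"
proof -
  define m where "m = nat \<lfloor>1/z\<rfloor>"
  have g1: "1/z > 1" using assms by (simp add: field_simps)
  have fl: "real m \<le> 1/z" "1/z < real m + 1" unfolding m_def using g1 by linarith+
  have "1/z \<noteq> real m"
  proof
    assume h: "1/z = real m"
    then have "real m \<noteq> 0" using g1 by simp
    with h show False using assms(3)[of m] assms(1) by (auto simp: field_simps)
  qed
  with fl have fl': "real m < 1/z" by simp
  have m1: "m \<ge> 1" using fl g1 by linarith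
  show ?thesis
  proof (cases "even m")
    case True
    then obtain k where mk: "m = 2*k" by blast
    with m1 have k1: "k \<ge> 1" by simp
    have "2*real k < 1/z" "1/z < 2*real k + 1" using fl fl' mk by auto
    then have "z \<in> Br k False" using assms(1) k1 by (auto simp: Br_def field_simps)
    with k1 show ?thesis by blast
  next
    case False
    define k where "k = (m+1) div 2"
    have mk: "m = 2*k - 1" "k \<ge> 1" using False m1 unfolding k_def by presburger+
    have "2*real k - 1 < 1/z" "1/z < 2*real k" using fl fl' mk by (auto simp: of_nat_diff)
    then have "z \<in> Br k True" using assms(1) mk by (auto simp: Br_def field_simps)
    with mk show ?thesis by blast
  qed
qed

definition sB :: "nat \<Rightarrow> bool \<Rightarrow> real" where
  "sB k b = (if b then 1/(2*real k - 1) else 1/(2*real k + 1))"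

lemma Br_sets[measurable]: "Br k b \<in> sets borel"
  unfolding Br_def by auto

lemma emeasure_Br:
  assumes "k \<ge> 1" shows "emeasure lborel (Br k b) = ennreal (sB k b / (2*real k))"
proof -
  have k: "real k \<ge> 1" using assms by simp
  show ?thesis
  proof (cases b)
    case True
    have le: "1/(2*real k) \<le> 1/(2*real k - 1)" using k by (simp add: frac_le)
    have "1/(2*real k - 1) - 1/(2*real k) = (1/(2*real k - 1)) / (2*real k)"
      using k by (simp add: field_simps)
    then show ?thesis using True le by (simp add: Br_def sB_def)
  next
    case False
    have le: "1/(2*real k + 1) \<le> 1/(2*real k)" using k by (simp add: frac_le)
    have "1/(2*real k) - 1/(2*real k + 1) = (1/(2*real k + 1)) / (2*real k)"
      using k by (simp add: field_simps)
    then show ?thesis using False le by (simp add: Br_def sB_def)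
  qed
qed

lemma aff_iff:
  assumes "k \<ge> 1" shows "(aff k b z \<in> {0<..<sB k b}) = (z \<in> Br k b)"
proof -
  have k: "real k \<ge> 1" using assms by simp
  show ?thesis
  proof (cases b)
    case True
    have "(0 < 2*real k*z - 1) = (1/(2*real k) < z)" using k by (simp add: field_simps)
    moreover have "(2*real k*z - 1 < 1/(2*real k - 1)) = (z < 1/(2*real k - 1))"
    proof -
      have p: "2*real k - 1 > 0" "2 * real k > 0" using k by auto
      have "(2*real k*z - 1 < 1/(2*real k - 1)) = ((2*real k*z - 1)*(2*real k - 1) < 1)"
        using p by (simp add: less_divide_eq)
      also have "(2*real k*z - 1)*(2*real k - 1) = 2*real k*(z*(2*real k - 1)) - (2*real k - 1)"
        by (simp add: algebra_simps)
      also have "(2*real k*(z*(2*real k - 1)) - (2*real k - 1) < 1) = (2*real k*(z*(2*real k - 1)) < 2*real k * 1)"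
        by linarith
      also have "\<dots> = (z*(2*real k - 1) < 1)" using p by (simp only: mult_less_cancel_left_pos)
      also have "\<dots> = (z < 1/(2*real k - 1))" using p by (simp add: less_divide_eq)
      finally show ?thesis .
    qed
    ultimately show ?thesis using True by (simp add: aff_def sB_def Br_def)
  next
    case False
    have "(1 - 2*real k*z < 1/(2*real k + 1)) = (1/(2*real k + 1) < z)"
    proof -
      have p: "2*real k + 1 > 0" "2 * real k > 0" using k by auto
      have "(1 - 2*real k*z < 1/(2*real k + 1)) = ((1 - 2*real k*z)*(2*real k + 1) < 1)"
        using p by (simp add: less_divide_eq)
      also have "(1 - 2*real k*z)*(2*real k + 1) = (2*real k + 1) - 2*real k*(z*(2*real k + 1))"
        by (simp add: algebra_simps)
      also have "((2*real k + 1) - 2*real k*(z*(2*real k + 1)) < 1) = (2*real k * 1 < 2*real k*(z*(2*real k + 1)))"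
        by linarith
      also have "\<dots> = (1 < z*(2*real k + 1))" using p by (simp only: mult_less_cancel_left_pos)
      also have "\<dots> = (1/(2*real k + 1) < z)" using p by (simp add: divide_less_eq)
      finally show ?thesis .
    qed
    moreover have "(0 < 1 - 2*real k*z) = (z < 1/(2*real k))" using k by (simp add: field_simps)
    ultimately show ?thesis using False by (auto simp add: aff_def sB_def Br_def)
  qed
qed

lemma cov:
  assumes k: "k \<ge> 1" and G[measurable]: "G \<in> borel_measurable borel"
  shows "(\<integral>\<^sup>+z. G (aff k b z) * indicator (Br k b) z \<partial>lborel)
         = ennreal (1/(2*real k)) * (\<integral>\<^sup>+w. G w * indicator {0<..<sB k b} w \<partial>lborel)"
proof -
  have kr: "real k \<ge> 1" using k by simp
  define c where "c = (if b then 2*real k else - 2*real k)"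
  define t where "t = (if b then -1 else (1::real))"
  have c0: "c \<noteq> 0" "\<bar>c\<bar> = 2*real k" using kr by (auto simp: c_def)
  have e: "\<And>x. t + c * x = aff k b x" by (simp add: c_def t_def aff_def)
  have "(\<integral>\<^sup>+w. G w * indicator {0<..<sB k b} w \<partial>lborel)
      = ennreal (2*real k) * (\<integral>\<^sup>+x. G (t + c*x) * indicator {0<..<sB k b} (t + c*x) \<partial>lborel)"
    using nn_integral_real_affine[of "\<lambda>w. G w * indicator {0<..<sB k b} w" c t] c0 by simp
  also have "(\<integral>\<^sup>+x. G (t + c*x) * indicator {0<..<sB k b} (t + c*x) \<partial>lborel)
      = (\<integral>\<^sup>+z. G (aff k b z) * indicator (Br k b) z \<partial>lborel)"
    by (intro nn_integral_cong) (simp only: e indicator_def aff_iff[OF k])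
  finally have h: "(\<integral>\<^sup>+w. G w * indicator {0<..<sB k b} w \<partial>lborel) =
     ennreal (2*real k) * (\<integral>\<^sup>+z. G (aff k b z) * indicator (Br k b) z \<partial>lborel)" .
  have "ennreal (1/(2*real k)) * ennreal (2*real k) = 1"
    using kr by (simp add: ennreal_mult[symmetric])
  then show ?thesis unfolding h by (simp add: mult.assoc[symmetric])
qed

lemma Br_floor:
  assumes "k \<ge> 1" "z \<in> Br k b"
  shows "\<lfloor>1/z\<rfloor> = (if b then 2 * int k - 1 else 2 * int k)"
  using recip_bounds[OF assms] by (cases b) (auto simp: floor_eq_iff)

lemma Br_unique:
  assumes "k \<ge> 1" "z \<in> Br k b" "k' \<ge> 1" "z \<in> Br k' b'"
  shows "k' = k \<and> b' = b"
proof -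
  have "(if b then 2 * int k - 1 else 2 * int k) = (if b' then 2 * int k' - 1 else 2 * int k')"
    using Br_floor[OF assms(1,2)] Br_floor[OF assms(3,4)] by simp
  then show ?thesis by (cases b; cases b'; simp; presburger)
qed

lemma Br_sub:
  assumes "j \<ge> 1" "k \<ge> j" shows "Br k b \<subseteq> {0<..<1/(2*real j - 1)}"
proof
  fix z assume z: "z \<in> Br k b"
  have k: "k \<ge> 1" using assms by simp
  have zp: "z > 0" using recip_bounds(1)[OF k z] .
  have "1/z > 2*real k - 1" using recip_bounds(2,3)[OF k z] by (cases b) auto
  moreover have "2*real k - 1 \<ge> 2 * real j - 1" using assms by simp
  ultimately have "1/z > 2 * real j - 1" by linarith
  moreover have "2 * real j - 1 > 0" using assms by simp
  ultimately have "z < 1/(2*real j - 1)" using zp by (simp add: field_simps)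
  then show "z \<in> {0<..<1/(2*real j - 1)}" using zp by simp
qed

lemma Br_ge:
  assumes "j \<ge> 1" "k \<ge> 1" "z \<in> Br k b" "z < 1/(2*real j - 1)" shows "k \<ge> j"
proof -
  have zp: "z > 0" using recip_bounds(1)[OF assms(2,3)] .
  have "1/z < 2*real k + 1" using recip_bounds(2,3)[OF assms(2,3)] by (cases b) auto
  moreover have "2 * real j - 1 > 0" using assms by simp
  then have "2 * real j - 1 < 1/z" using assms(4) zp by (simp add: field_simps)
  ultimately have "real j < real k + 1" by linarith
  then show ?thesis by simp
qed

lemma decomp:
  assumes j: "j \<ge> 1" and F[measurable]: "F \<in> borel_measurable borel"
  shows "(\<integral>\<^sup>+w. F w * indicator {0<..<1/(2*real j - 1)} w \<partial>lborel) =
    (\<Sum>i. (\<integral>\<^sup>+w. F w * indicator (Br (i+j) True) w \<partial>lborel) + (\<integral>\<^sup>+w. F w * indicator (Br (i+j) False) w \<partial>lborel))"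
proof -
  let ?s = "1/(2*real j - 1)"
  have s1: "?s \<le> 1" using j by simp
  have "(\<Sum>i. (\<integral>\<^sup>+w. F w * indicator (Br (i+j) True) w \<partial>lborel) + (\<integral>\<^sup>+w. F w * indicator (Br (i+j) False) w \<partial>lborel))
     = (\<Sum>i. (\<integral>\<^sup>+w. F w * indicator (Br (i+j) True) w + F w * indicator (Br (i+j) False) w \<partial>lborel))"
    by (intro suminf_cong nn_integral_add[symmetric]) auto
  also have "\<dots> = (\<integral>\<^sup>+w. (\<Sum>i. F w * indicator (Br (i+j) True) w + F w * indicator (Br (i+j) False) w) \<partial>lborel)"
    by (intro nn_integral_suminf[symmetric]) auto
  also have "\<dots> = (\<integral>\<^sup>+w. F w * indicator {0<..<?s} w \<partial>lborel)"
  proof (intro nn_integral_cong_AE)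
    have N: "range (\<lambda>n::nat. 1 / real n) \<in> null_sets lborel"
      by (auto simp: null_sets_def emeasure_lborel_countable intro: sets.countable)
    show "AE w in lborel. (\<Sum>i. F w * indicator (Br (i+j) True) w + F w * indicator (Br (i+j) False) w)
         = F w * indicator {0<..<?s} w"
    proof (rule AE_I'[OF N], safe)
      fix w assume ne: "(\<Sum>i. F w * indicator (Br (i+j) True) w + F w * indicator (Br (i+j) False) w)
         \<noteq> F w * indicator {0<..<?s} w"
      show "w \<in> range (\<lambda>n::nat. 1 / real n)"
      proof (rule ccontr)
        assume nr: "w \<notin> range (\<lambda>n::nat. 1 / real n)"
        show False
        proof (cases "w \<in> {0<..<?s}")
          case False
          have "\<And>i b. w \<notin> Br (i+j) b"
          proof -
            fix i b show "w \<notin> Br (i+j) b" using Br_sub[OF j, of "i+j" b] False by (meson le_add2 subsetD)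
          qed
          then have "(\<Sum>i. F w * indicator (Br (i+j) True) w + F w * indicator (Br (i+j) False) w) = 0"
            by simp
          then show False using ne False by simp
        next
          case True
          then obtain k b where kb: "k \<ge> 1" "w \<in> Br k b"
            using in_branch[of w] nr s1 by force
          have kj: "k \<ge> j" using Br_ge[OF j kb] True by simp
          have z: "\<And>i. i \<noteq> k - j \<Longrightarrow> F w * indicator (Br (i+j) True) w + F w * indicator (Br (i+j) False) w = 0"
          proof -
            fix i assume "i \<noteq> k - j"
            then have "\<And>b'. w \<notin> Br (i+j) b'" using Br_unique[OF kb, of "i+j"] j kj by auto
            then show "F w * indicator (Br (i+j) True) w + F w * indicator (Br (i+j) False) w = 0" by simp
          qed
          have "(\<Sum>i. F w * indicator (Br (i+j) True) w + F w * indicator (Br (i+j) False) w)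
              = (\<Sum>i\<in>{k-j}. F w * indicator (Br (i+j) True) w + F w * indicator (Br (i+j) False) w)"
            by (rule suminf_finite) (use z in auto)
          also have "\<dots> = F w * indicator (Br k True) w + F w * indicator (Br k False) w" using kj by simp
          also have "\<dots> = F w"
          proof (cases b)
            case True
            then have "w \<notin> Br k False" using Br_unique[OF kb, of k False] kb by auto
            then show ?thesis using kb True by simp
          next
            case False
            then have "w \<notin> Br k True" using Br_unique[OF kb, of k True] kb by auto
            then show ?thesis using kb False by simp
          qed
          finally show False using ne True by simp
        qed
      qed
    qed
  qed
  finally show ?thesis by simp
qed

definition good :: "ennreal \<Rightarrow> (real \<Rightarrow> ennreal) \<Rightarrow> bool" where
  "good B G \<longleftrightarrow> G \<in> borel_measurable borel \<and>
     (\<forall>k\<ge>1. \<forall>b. (\<integral>\<^sup>+z. G z * indicator (Br k b) z \<partial>lborel) \<le> B * emeasure lborel (Br k b))"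

lemma good_int:
  assumes g: "good B G" and j: "j \<ge> 1" and V[measurable]: "V \<in> sets borel"
    and dich: "\<And>k b. k \<ge> j \<Longrightarrow> Br k b \<subseteq> V \<or> Br k b \<inter> V = {}"
  shows "(\<integral>\<^sup>+w. G w * indicator V w * indicator {0<..<1/(2*real j - 1)} w \<partial>lborel)
          \<le> B * emeasure lborel ({0<..<1/(2*real j - 1)} \<inter> V)"
proof -
  have G[measurable]: "G \<in> borel_measurable borel" using g by (simp add: good_def)
  have tm: "(\<integral>\<^sup>+w. G w * indicator V w * indicator (Br k b) w \<partial>lborel)
      \<le> B * (\<integral>\<^sup>+w. indicator V w * indicator (Br k b) w \<partial>lborel)" if k: "k \<ge> j" for k b
  proof -
    have k1: "k \<ge> 1" using k j by simp
    from dich[OF k, of b] show ?thesis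
    proof
      assume sub: "Br k b \<subseteq> V"
      have e1: "\<And>w. G w * indicator V w * indicator (Br k b) w = G w * indicator (Br k b) w"
        using sub by (auto simp: indicator_def)
      have e2: "(\<integral>\<^sup>+w. indicator V w * indicator (Br k b) w \<partial>lborel) = emeasure lborel (Br k b)"
      proof -
        have "\<And>w. indicator V w * indicator (Br k b) w = (indicator (Br k b) w :: ennreal)"
          using sub by (auto simp: indicator_def)
        then show ?thesis by simp
      qed
      show ?thesis unfolding e1 e2 using g k1 by (simp add: good_def)
    next
      assume dis: "Br k b \<inter> V = {}"
      have e: "(\<lambda>w. G w * indicator V w * indicator (Br k b) w) = (\<lambda>w. 0)"
        using dis by (auto simp: indicator_def fun_eq_iff)
      have "(\<integral>\<^sup>+w. G w * indicator V w * indicator (Br k b) w \<partial>lborel) = 0"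
        by (simp only: e) simp
      then show ?thesis by simp
    qed
  qed
  have "(\<integral>\<^sup>+w. G w * indicator V w * indicator {0<..<1/(2*real j - 1)} w \<partial>lborel)
     = (\<Sum>i. (\<integral>\<^sup>+w. G w * indicator V w * indicator (Br (i+j) True) w \<partial>lborel) + (\<integral>\<^sup>+w. G w * indicator V w * indicator (Br (i+j) False) w \<partial>lborel))"
    using decomp[OF j, of "\<lambda>w. G w * indicator V w"] by simp
  also have "\<dots> \<le> (\<Sum>i. B * (\<integral>\<^sup>+w. indicator V w * indicator (Br (i+j) True) w \<partial>lborel) + B * (\<integral>\<^sup>+w. indicator V w * indicator (Br (i+j) False) w \<partial>lborel))"
    by (intro suminf_le add_mono tm) auto
  also have "\<dots> = B * (\<Sum>i. (\<integral>\<^sup>+w. indicator V w * indicator (Br (i+j) True) w \<partial>lborel) + (\<integral>\<^sup>+w. indicator V w * indicator (Br (i+j) False) w \<partial>lborel))"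
    by (simp only: distrib_left[symmetric] ennreal_suminf_cmult)
  also have "(\<Sum>i. (\<integral>\<^sup>+w. indicator V w * indicator (Br (i+j) True) w \<partial>lborel) + (\<integral>\<^sup>+w. indicator V w * indicator (Br (i+j) False) w \<partial>lborel))
     = (\<integral>\<^sup>+w. indicator V w * indicator {0<..<1/(2*real j - 1)} w \<partial>lborel)"
    using decomp[OF j, of "indicator V"] by simp
  also have "\<dots> = emeasure lborel ({0<..<1/(2*real j - 1)} \<inter> V)"
  proof -
    have "\<And>w. indicator V w * indicator {0<..<1/(2*real j - 1)} w = (indicator ({0<..<1/(2*real j - 1)} \<inter> V) w :: ennreal)"
      by (auto simp: indicator_def)
    then show ?thesis by simp
  qed
  finally show ?thesis .
qed

lemma good_int_all:
  assumes g: "good B G" and j: "j \<ge> 1"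
  shows "(\<integral>\<^sup>+w. G w * indicator {0<..<1/(2*real j - 1)} w \<partial>lborel) \<le> B * ennreal (1/(2*real j - 1))"
  using good_int[OF g j, of UNIV] j by simp

lemma sB_form: assumes "k \<ge> 1" shows "\<exists>j\<ge>1. sB k b = 1/(2*real j - 1) \<and> j \<ge> k"
proof (cases b)
  case True
  then show ?thesis using assms by (intro exI[of _ k]) (simp add: sB_def)
next
  case False
  note assms
  moreover have "2 * real (k+1) - 1 = 2 * real k + 1" by simp
  ultimately show ?thesis using False by (intro exI[of _ "k+1"]) (simp add: sB_def)
qed

lemma good_T:
  assumes g: "good B G" shows "good B (\<lambda>z. G (sE_T z))"
  unfolding good_def
proof (intro conjI allI impI)
  have G[measurable]: "G \<in> borel_measurable borel" using g by (simp add: good_def)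
  show "(\<lambda>z. G (sE_T z)) \<in> borel_measurable borel" by measurable
  fix k b assume k: "(k::nat) \<ge> 1"
  have "(\<integral>\<^sup>+z. G (sE_T z) * indicator (Br k b) z \<partial>lborel) = (\<integral>\<^sup>+z. G (aff k b z) * indicator (Br k b) z \<partial>lborel)"
    by (intro nn_integral_cong) (auto simp: indicator_def branch_facts[OF k])
  also have "\<dots> = ennreal (1/(2*real k)) * (\<integral>\<^sup>+w. G w * indicator {0<..<sB k b} w \<partial>lborel)"
    by (rule cov[OF k G])
  also have "\<dots> \<le> ennreal (1/(2*real k)) * (B * ennreal (sB k b))"
  proof -
    obtain j where j: "j \<ge> 1" "sB k b = 1/(2*real j - 1)" using sB_form[OF k] by blast
    show ?thesis unfolding j(2) by (intro mult_left_mono good_int_all[OF g j(1)]) auto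
  qed
  also have "\<dots> = B * emeasure lborel (Br k b)"
  proof -
    have "sB k b \<ge> 0" using k by (simp add: sB_def)
    then have "ennreal (1/(2*real k)) * ennreal (sB k b) = ennreal (sB k b / (2*real k))"
      by (simp add: ennreal_mult[symmetric])
    then show ?thesis unfolding emeasure_Br[OF k] by (metis mult.commute mult.left_commute)
  qed
  finally show "(\<integral>\<^sup>+z. G (sE_T z) * indicator (Br k b) z \<partial>lborel) \<le> B * emeasure lborel (Br k b)" .
qed

lemma good_Tn:
  assumes g: "good B G" shows "good B (\<lambda>z. G ((sE_T ^^ n) z))"
proof (induction n)
  case 0 then show ?case using g by simp
next
  case (Suc n)
  have "good B (\<lambda>z. G ((sE_T ^^ n) (sE_T z)))" using good_T[OF Suc] by simp
  then show ?case by (simp add: funpow_Suc_right del: funpow.simps)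
qed

lemma good_unit:
  assumes g: "good B G" shows "(\<integral>\<^sup>+w. G w * indicator {0<..<1} w \<partial>lborel) \<le> B"
  using good_int_all[OF g, of 1] by simp

lemma d1_bounds:
  assumes "z > 0" shows "1/z - 1 < real_of_int (sE_d1 z)" "real_of_int (sE_d1 z) < 1/z + 1"
  unfolding sE_d1_def by (auto; linarith)+

lemma good_big:
  assumes r: "r > 0"
  shows "good (ennreal (3/r)) (\<lambda>z. if real_of_int (sE_d1 (sE_T z)) > r * real_of_int (sE_d1 z) then 1 else 0)"
  unfolding good_def
proof (intro conjI allI impI)
  show "(\<lambda>z. if real_of_int (sE_d1 (sE_T z)) > r * real_of_int (sE_d1 z) then 1 else 0 :: ennreal) \<in> borel_measurable borel"
    by measurable
  fix k b assume k: "(k::nat) \<ge> 1"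
  have kr: "real k \<ge> 1" using k by simp
  let ?H = "\<lambda>z. if real_of_int (sE_d1 (sE_T z)) > r * real_of_int (sE_d1 z) then 1 else 0 :: ennreal"
  let ?P = "\<lambda>w. if real_of_int (sE_d1 w) > r * (2 * real k) then 1 else 0 :: ennreal"
  have Pm[measurable]: "?P \<in> borel_measurable borel" by measurable
  have sb: "sB k b \<ge> 1/(3*real k)" "sB k b > 0" "sB k b \<le> 1"
    using kr by (auto simp: sB_def frac_le)
  show "(\<integral>\<^sup>+z. ?H z * indicator (Br k b) z \<partial>lborel) \<le> ennreal (3/r) * emeasure lborel (Br k b)"
  proof (cases "r \<ge> 1")
    case False
    have "(\<integral>\<^sup>+z. ?H z * indicator (Br k b) z \<partial>lborel) \<le> (\<integral>\<^sup>+z. indicator (Br k b) z \<partial>lborel)"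
      by (intro nn_integral_mono) (auto simp: indicator_def)
    also have "\<dots> = 1 * emeasure lborel (Br k b)" by simp
    also have "\<dots> \<le> ennreal (3/r) * emeasure lborel (Br k b)"
      using False r by (intro mult_right_mono) auto
    finally show ?thesis .
  next
    case True
    have "(\<integral>\<^sup>+z. ?H z * indicator (Br k b) z \<partial>lborel) = (\<integral>\<^sup>+z. ?P (aff k b z) * indicator (Br k b) z \<partial>lborel)"
      by (intro nn_integral_cong) (auto simp: indicator_def branch_facts[OF k])
    also have "\<dots> = ennreal (1/(2*real k)) * (\<integral>\<^sup>+w. ?P w * indicator {0<..<sB k b} w \<partial>lborel)"
      by (rule cov[OF k Pm])
    also have "\<dots> \<le> ennreal (1/(2*real k)) * (\<integral>\<^sup>+w. indicator {0<..<1/(real k * r)} w \<partial>lborel)"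
    proof (intro mult_left_mono nn_integral_mono)
      fix w
      show "?P w * indicator {0<..<sB k b} w \<le> indicator {0<..<1/(real k * r)} w"
      proof (cases "real_of_int (sE_d1 w) > r * (2 * real k) \<and> w \<in> {0<..<sB k b}")
        case True
        then have w: "w > 0" by simp
        have "r * (2 * real k) < 1/w + 1" using d1_bounds(2)[OF w] True by linarith
        moreover have "real k * r \<le> r * (2 * real k) - 1" using kr \<open>1 \<le> r\<close>
          by (simp add: algebra_simps) (metis mult_mono' mult.commute mult_1 order.trans zero_le_one kr)
        ultimately have "real k * r < 1/w" by linarith
        then have "w < 1/(real k * r)" using w kr r by (simp add: field_simps)
        then show ?thesis using True by (simp add: indicator_def)
      qed (auto simp: indicator_def)
    qed auto
    also have "\<dots> = ennreal (1/(2*real k)) * ennreal (1/(real k * r))"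
      using kr r by simp
    also have "\<dots> = ennreal (1/(2*real k) * (1/(real k * r)))"
      using kr r by (intro ennreal_mult[symmetric]) auto
    also have "\<dots> \<le> ennreal (3/r * (sB k b / (2*real k)))"
    proof (rule ennreal_leI)
      have "1/(2*real k) * (1/(real k * r)) = (1/(3*real k)) * (3/(r * (2*real k)))"
        using kr r by (simp add: field_simps)
      also have "\<dots> \<le> sB k b * (3/(r * (2*real k)))"
        using sb kr r by (intro mult_right_mono) auto
      also have "\<dots> = 3/r * (sB k b / (2*real k))" by (simp add: field_simps)
      finally show "1/(2*real k) * (1/(real k * r)) \<le> 3/r * (sB k b / (2*real k))" .
    qed
    also have "\<dots> = ennreal (3/r) * emeasure lborel (Br k b)"
      unfolding emeasure_Br[OF k] using r sb kr by (intro ennreal_mult) auto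
    finally show ?thesis .
  qed
qed

lemma good_small:
  assumes r: "r \<ge> 1" and g: "good B G"
  shows "good (B * ennreal (1 - 1/(5*r)))
     (\<lambda>z. if real_of_int (sE_d1 (sE_T z)) \<le> r * real_of_int (sE_d1 z) then G (sE_T z) else 0)"
  unfolding good_def
proof (intro conjI allI impI)
  have G[measurable]: "G \<in> borel_measurable borel" using g by (simp add: good_def)
  show "(\<lambda>z. if real_of_int (sE_d1 (sE_T z)) \<le> r * real_of_int (sE_d1 z) then G (sE_T z) else 0) \<in> borel_measurable borel"
    by measurable
  fix k b assume k: "(k::nat) \<ge> 1"
  have kr: "real k \<ge> 1" using k by simp
  let ?H = "\<lambda>z. if real_of_int (sE_d1 (sE_T z)) \<le> r * real_of_int (sE_d1 z) then G (sE_T z) else 0"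
  let ?P = "\<lambda>w. if real_of_int (sE_d1 w) \<le> r * (2 * real k) then G w else 0"
  have Pm[measurable]: "?P \<in> borel_measurable borel" by measurable
  obtain j where j: "j \<ge> 1" "sB k b = 1/(2*real j - 1)" "j \<ge> k" using sB_form[OF k] by blast
  define s where "s = sB k b"
  define K where "K = nat \<lceil>real k * r\<rceil>"
  define a where "a = 1/(2*real K + 1)"
  have K: "real K \<ge> real k * r" "real K < real k * r + 1" unfolding K_def
    using kr r by (simp_all add: of_nat_nat; linarith)+
  have krr: "real k * r \<ge> 1" using kr r by (metis mult_mono' mult_1 zero_le_one)
  have a0: "a > 0" unfolding a_def by simp
  have sp: "s > 0" "s \<le> 1/real k" unfolding s_def using kr by (auto simp: sB_def frac_le)
  have "(\<integral>\<^sup>+z. ?H z * indicator (Br k b) z \<partial>lborel) = (\<integral>\<^sup>+z. ?P (aff k b z) * indicator (Br k b) z \<partial>lborel)"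
    by (intro nn_integral_cong) (auto simp: indicator_def branch_facts[OF k])
  also have "\<dots> = ennreal (1/(2*real k)) * (\<integral>\<^sup>+w. ?P w * indicator {0<..<sB k b} w \<partial>lborel)"
    by (rule cov[OF k Pm])
  also have "\<dots> \<le> ennreal (1/(2*real k)) * (\<integral>\<^sup>+w. G w * indicator {a<..} w * indicator {0<..<1/(2*real j - 1)} w \<partial>lborel)"
  proof (intro mult_left_mono nn_integral_mono)
    fix w
    show "?P w * indicator {0<..<sB k b} w \<le> G w * indicator {a<..} w * indicator {0<..<1/(2*real j - 1)} w"
    proof (cases "real_of_int (sE_d1 w) \<le> r * (2 * real k) \<and> w \<in> {0<..<sB k b}")
      case True
      then have w: "w > 0" by simp
      have "1/w - 1 < r * (2 * real k)" using d1_bounds(1)[OF w] True by linarith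
      moreover have "r * (2 * real k) = 2 * (real k * r)" by simp
      ultimately have "1/w < 2 * real K + 1" using K by linarith
      then have "w > a" unfolding a_def using w by (simp add: field_simps)
      then show ?thesis using True j by (simp add: indicator_def)
    qed (auto simp: indicator_def)
  qed auto
  also have "\<dots> \<le> ennreal (1/(2*real k)) * (B * emeasure lborel ({0<..<1/(2*real j - 1)} \<inter> {a<..}))"
  proof (intro mult_left_mono good_int[OF g j(1)])
    fix k' b' assume k': "k' \<ge> j"
    have k'1: "k' \<ge> 1" using k' j by simp
    show "Br k' b' \<subseteq> {a<..} \<or> Br k' b' \<inter> {a<..} = {}"
    proof (cases "k' \<le> K")
      case True
      have "Br k' b' \<subseteq> {a<..}"
      proof
        fix z assume z: "z \<in> Br k' b'"
        have zp: "z > 0" using recip_bounds(1)[OF k'1 z] .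
        have "1/z < 2*real k' + 1" using recip_bounds(2,3)[OF k'1 z] by (cases b') auto
        moreover have "real k' \<le> real K" using True by simp
        ultimately have "1/z < 2*real K + 1" by linarith
        then show "z \<in> {a<..}" unfolding a_def using zp by (simp add: field_simps)
      qed
      then show ?thesis by blast
    next
      case False
      have "Br k' b' \<inter> {a<..} = {}"
      proof (rule ccontr)
        assume "Br k' b' \<inter> {a<..} \<noteq> {}"
        then obtain z where z: "z \<in> Br k' b'" "z > a" by auto
        have zp: "z > 0" using recip_bounds(1)[OF k'1 z(1)] .
        have "1/z > 2*real k' - 1" using recip_bounds(2,3)[OF k'1 z(1)] by (cases b') auto
        moreover have "real k' \<ge> real K + 1" using False by simp
        ultimately have "1/z > 2*real K + 1" by linarith
        then have "z < a" unfolding a_def using zp by (simp add: field_simps)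
        then show False using z by simp
      qed
      then show ?thesis by blast
    qed
  qed auto
  also have "\<dots> \<le> ennreal (1/(2*real k)) * (B * ennreal ((1 - 1/(5*r)) * s))"
  proof (rule mult_left_mono)
    have "emeasure lborel ({0<..<1/(2*real j - 1)} \<inter> {a<..}) \<le> ennreal ((1 - 1/(5*r)) * s)"
    proof (cases "a \<le> s")
      case True
      have e: "{0<..<1/(2*real j - 1)} \<inter> {a<..} = {a<..<s}" using a0 j by (auto simp: s_def)
      have "s - a \<le> (1 - 1/(5*r)) * s"
      proof -
        have "2 * real K + 1 \<le> 5 * (real k * r)" using K krr by linarith
        then have "1/(5 * (real k * r)) \<le> a" unfolding a_def using krr
          by (intro frac_le) auto
        moreover have "s / (5*r) \<le> 1/(5 * (real k * r))"
          using sp r kr by (simp add: field_simps)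
        ultimately have "s / (5*r) \<le> a" by linarith
        then show ?thesis by (simp add: algebra_simps)
      qed
      then show ?thesis unfolding e using True by (simp add: ennreal_leI)
    next
      case False
      have e: "{0<..<1/(2*real j - 1)} \<inter> {a<..} = {}" using False j by (auto simp: s_def)
      show ?thesis unfolding e by simp
    qed
    then show "B * emeasure lborel ({0<..<1/(2*real j - 1)} \<inter> {a<..}) \<le> B * ennreal ((1 - 1/(5*r)) * s)"
      by (rule mult_left_mono) auto
  qed auto
  also have "\<dots> = B * ennreal (1 - 1/(5*r)) * emeasure lborel (Br k b)"
  proof -
    have p: "1 - 1/(5*r) \<ge> 0" using r by (simp add: field_simps)
    have "ennreal (1/(2*real k)) * ennreal ((1 - 1/(5*r)) * s) = ennreal (1/(2*real k) * ((1 - 1/(5*r)) * s))"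
      using p sp by (intro ennreal_mult[symmetric]) auto
    also have "\<dots> = ennreal ((1 - 1/(5*r)) * (s / (2*real k)))"
      by (rule arg_cong[where f=ennreal]) simp
    also have "\<dots> = ennreal (1 - 1/(5*r)) * ennreal (s / (2*real k))"
      using p sp kr by (intro ennreal_mult) auto
    finally have "ennreal (1/(2*real k)) * ennreal ((1 - 1/(5*r)) * s) = ennreal (1 - 1/(5*r)) * ennreal (s / (2*real k))" .
    then show ?thesis unfolding emeasure_Br[OF k] s_def[symmetric] by (metis mult.assoc mult.commute)
  qed
  finally show "(\<integral>\<^sup>+z. ?H z * indicator (Br k b) z \<partial>lborel) \<le> B * ennreal (1 - 1/(5*r)) * emeasure lborel (Br k b)" .
qed

lemma sE_Tn_meas[measurable]: "(sE_T ^^ n) \<in> borel_measurable borel"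
  by (rule measurable_compose_n) simp

definition IR :: "real set" where "IR = {0<..<1} - \<rat>"

lemma IR_branch:
  assumes "z \<in> IR" shows "\<exists>k\<ge>1. \<exists>b. z \<in> Br k b"
proof -
  have "\<And>n::nat. z \<noteq> 1 / real n" using assms by (auto simp: IR_def)
  then show ?thesis using in_branch[of z] assms by (auto simp: IR_def)
qed

lemma IR_T: assumes "z \<in> IR" shows "sE_T z \<in> IR"
proof -
  obtain k b where kb: "k \<ge> 1" "z \<in> Br k b" using IR_branch[OF assms] by blast
  have T: "sE_T z = aff k b z" using branch_facts[OF kb] by simp
  have r: "aff k b z \<in> {0<..<sB k b}" using aff_iff[OF kb(1)] kb(2) by simp
  have s1: "sB k b \<le> 1" using kb by (auto simp: sB_def)
  have kr: "real k \<ge> 1" using kb by simp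
  have nq: "aff k b z \<notin> \<rat>"
  proof
    assume q: "aff k b z \<in> \<rat>"
    have "z = (if b then (aff k b z + 1) / (2*real k) else (1 - aff k b z) / (2*real k))"
      using kr by (auto simp: aff_def field_simps)
    moreover have "(if b then (aff k b z + 1) / (2*real k) else (1 - aff k b z) / (2*real k)) \<in> \<rat>"
      using q by (auto intro!: Rats_divide Rats_add Rats_diff Rats_mult Rats_of_nat)
    ultimately show False using assms by (auto simp: IR_def)
  qed
  show ?thesis using r s1 nq T by (auto simp: IR_def)
qed

lemma IR_Tn: "z \<in> IR \<Longrightarrow> (sE_T ^^ n) z \<in> IR"
  by (induction n) (auto intro: IR_T)

lemma IR_d1: assumes "z \<in> IR" shows "real_of_int (sE_d1 z) \<ge> 2"
proof -
  obtain k b where kb: "k \<ge> 1" "z \<in> Br k b" using IR_branch[OF assms] by blast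
  then show ?thesis using branch_facts(2)[OF kb] by simp
qed

lemma R_succ:
  "sE_R (j+2) x = real_of_int (sE_d1 ((sE_T ^^ (Suc j)) x)) / real_of_int (sE_d1 ((sE_T ^^ j) x))"
  by (simp add: sE_R_def sE_d_def)

lemma R_pos: assumes "x \<in> IR" "k \<ge> 1" shows "sE_R k x > 0"
proof (cases "k \<le> 1")
  case True
  then show ?thesis using IR_d1[OF assms(1)] by (simp add: sE_R_def sE_d_def)
next
  case False
  have a: "real_of_int (sE_d k x) > 0" unfolding sE_d_def using IR_d1[OF IR_Tn[OF assms(1)]]
    by (smt (verit))
  have b: "real_of_int (sE_d (k-1) x) > 0" unfolding sE_d_def using IR_d1[OF IR_Tn[OF assms(1)]]
    by (smt (verit))
  show ?thesis using False a b by (simp add: sE_R_def)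
qed

lemma M_set: "{sE_R k x | k. 1 \<le> k \<and> k \<le> n} = (\<lambda>k. sE_R k x) ` {1..n}"
  by auto

lemma M_ge: assumes "1 \<le> k" "k \<le> n" shows "sE_R k x \<le> sE_M n x"
  unfolding sE_M_def M_set using assms by (intro Max_ge) auto

lemma M_le: assumes "n \<ge> 1" "\<And>k. 1 \<le> k \<Longrightarrow> k \<le> n \<Longrightarrow> sE_R k x \<le> c" shows "sE_M n x \<le> c"
  unfolding sE_M_def M_set using assms by (subst Max_le_iff) auto

lemma pt_zero:
  fixes \<phi> :: "nat \<Rightarrow> real"
  assumes pos: "\<And>n. n \<ge> 1 \<Longrightarrow> \<phi> n > 0"
    and mono: "\<And>m n. 1 \<le> m \<Longrightarrow> m \<le> n \<Longrightarrow> \<phi> m \<le> \<phi> n"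
    and inf: "\<And>C. eventually (\<lambda>n. \<phi> n > C) sequentially"
    and x: "x \<in> IR"
    and ev: "\<And>m. eventually (\<lambda>n. sE_R (n+2) x \<le> \<phi> (n+2) / real (Suc m)) sequentially"
  shows "limsup (\<lambda>n. ereal (sE_M n x / \<phi> n)) = 0"
proof -
  have "(\<lambda>n. sE_M n x / \<phi> n) \<longlonglongrightarrow> 0"
  proof (rule LIMSEQ_I)
    fix \<epsilon> :: real assume e: "0 < \<epsilon>"
    obtain m where m: "inverse (real (Suc m)) < \<epsilon>"
      using ex_inverse_of_nat_less[OF e] by (metis Suc_pred)
    obtain N where N: "\<And>n. n \<ge> N \<Longrightarrow> sE_R (n+2) x \<le> \<phi> (n+2) / real (Suc m)"
      using ev[of m] unfolding eventually_sequentially by blast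
    define C where "C = sE_M (N+1) x"
    obtain N2 where N2: "\<And>n. n \<ge> N2 \<Longrightarrow> \<phi> n > C * real (Suc m)"
      using inf[of "C * real (Suc m)"] unfolding eventually_sequentially by blast
    show "\<exists>no. \<forall>n\<ge>no. norm (sE_M n x / \<phi> n - 0) < \<epsilon>"
    proof (intro exI allI impI)
      fix n assume n: "n \<ge> N2 + N + 2"
      have pn: "\<phi> n > 0" using pos n by simp
      have Mle: "sE_M n x \<le> \<phi> n / real (Suc m)"
      proof (rule M_le)
        show "n \<ge> 1" using n by simp
        fix k assume k: "1 \<le> k" "k \<le> n"
        show "sE_R k x \<le> \<phi> n / real (Suc m)"
        proof (cases "k \<le> N+1")
          case True
          have "sE_R k x \<le> C" unfolding C_def using M_ge[OF k(1) True] .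
          also have "C < \<phi> n / real (Suc m)" using N2[of n] n by (simp add: field_simps)
          finally show ?thesis by simp
        next
          case False
          then have "sE_R ((k-2)+2) x \<le> \<phi> ((k-2)+2) / real (Suc m)" using N[of "k-2"] by simp
          moreover have "(k-2)+2 = k" using False by simp
          ultimately have "sE_R k x \<le> \<phi> k / real (Suc m)" by simp
          also have "\<dots> \<le> \<phi> n / real (Suc m)" using mono[OF k] by (simp add: divide_right_mono)
          finally show ?thesis .
        qed
      qed
      have Mpos: "sE_M n x > 0" using R_pos[OF x, of 1] M_ge[of 1 n x] n by simp
      have "sE_M n x / \<phi> n \<le> 1 / real (Suc m)" using Mle pn by (simp add: field_simps)
      then show "norm (sE_M n x / \<phi> n - 0) < \<epsilon>" using Mpos pn m by (simp add: inverse_eq_divide)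
    qed
  qed
  then have "((\<lambda>n. ereal (sE_M n x / \<phi> n)) \<longlonglongrightarrow> ereal 0)" by (rule tendsto_ereal)
  then have "limsup (\<lambda>n. ereal (sE_M n x / \<phi> n)) = ereal 0" by (intro lim_imp_Limsup) simp_all
  then show ?thesis by (simp add: zero_ereal_def)
qed

lemma part1:
  fixes \<phi> :: "nat \<Rightarrow> real"
  assumes pos: "\<And>n. n \<ge> 1 \<Longrightarrow> \<phi> n > 0"
    and mono: "\<And>m n. 1 \<le> m \<Longrightarrow> m \<le> n \<Longrightarrow> \<phi> m \<le> \<phi> n"
    and sum: "summable (\<lambda>n. 1 / \<phi> (Suc n))"
  shows "AE x in lborel. x \<in> {0<..<1} \<and> x \<notin> \<rat> \<longrightarrow>
               limsup (\<lambda>n. ereal (sE_M n x / \<phi> n)) = 0"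
proof -
  define r where "r m n = \<phi> (n+2) / real (Suc m)" for m n
  have rpos: "r m n > 0" for m n using pos[of "n+2"] by (simp add: r_def)
  define A where "A m n = {x \<in> {0<..<1::real}. real_of_int (sE_d1 (sE_T ((sE_T^^n) x))) > r m n * real_of_int (sE_d1 ((sE_T^^n) x))}" for m n
  have Am[measurable]: "A m n \<in> sets lborel" for m n unfolding A_def by measurable
  have Ale: "emeasure lborel (A m n) \<le> ennreal (3 / r m n)" for m n
  proof -
    let ?H = "\<lambda>z. if real_of_int (sE_d1 (sE_T z)) > r m n * real_of_int (sE_d1 z) then 1 else 0 :: ennreal"
    have "emeasure lborel (A m n) = (\<integral>\<^sup>+x. indicator (A m n) x \<partial>lborel)"
      by (rule nn_integral_indicator[symmetric]) (rule Am)
    also have "\<dots> = (\<integral>\<^sup>+x. ?H ((sE_T^^n) x) * indicator {0<..<1} x \<partial>lborel)"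
        by (intro nn_integral_cong) (simp add: A_def indicator_def)
    also have "\<dots> \<le> ennreal (3 / r m n)"
      by (rule good_unit[OF good_Tn[OF good_big[OF rpos]]])
    finally show ?thesis .
  qed
  have ae: "AE x in lborel. \<forall>m. eventually (\<lambda>n. x \<in> space lborel - A m n) sequentially"
  proof (rule AE_all_countable[THEN iffD2], rule allI)
    fix m
    show "AE x in lborel. eventually (\<lambda>n. x \<in> space lborel - A m n) sequentially"
    proof (rule borel_cantelli_AE1)
      show "\<And>n. A m n \<in> sets lborel" by (rule Am)
      show "emeasure lborel (A m n) < \<infinity>" for n by (rule le_less_trans[OF Ale]) simp
      have s2: "summable (\<lambda>n. 3 * real (Suc m) * (1 / \<phi> (Suc (Suc n))))"
      proof -
        have "summable (\<lambda>n. 1 / \<phi> (Suc (Suc n)))"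
          using sum summable_Suc_iff[of "\<lambda>n. 1 / \<phi> (Suc n)"] by simp
        then show ?thesis by (rule summable_mult)
      qed
      show "summable (\<lambda>n. measure lborel (A m n))"
      proof (rule summable_comparison_test'[OF s2])
        fix n :: nat
        have "measure lborel (A m n) \<le> 3 / r m n"
          using Ale[of m n] rpos[of m n] unfolding measure_def by (intro enn2real_leI) auto
        also have "\<dots> = 3 * real (Suc m) * (1 / \<phi> (Suc (Suc n)))" by (simp add: r_def)
        finally show "norm (measure lborel (A m n)) \<le> 3 * real (Suc m) * (1 / \<phi> (Suc (Suc n)))"
          by simp
      qed
    qed
  qed
  have inf: "\<And>C. eventually (\<lambda>n. \<phi> n > C) sequentially"
  proof -
    fix C :: real
    define C' where "C' = max C 1"
    have lim: "(\<lambda>n. 1 / \<phi> (Suc n)) \<longlonglongrightarrow> 0" using summable_LIMSEQ_zero[OF sum] .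
    have c0: "0 < 1 / C'" unfolding C'_def by simp
    have "eventually (\<lambda>n. 1 / \<phi> (Suc n) < 1 / C') sequentially"
      by (rule order_tendstoD(2)[OF lim c0])
    then obtain N where N: "\<And>n. n \<ge> N \<Longrightarrow> 1 / \<phi> (Suc n) < 1 / C'"
      unfolding eventually_sequentially by blast
    show "eventually (\<lambda>n. \<phi> n > C) sequentially"
      unfolding eventually_sequentially
    proof (intro exI allI impI)
      fix n assume n: "n \<ge> Suc N"
      then obtain n' where n': "n = Suc n'" "n' \<ge> N" by (cases n) auto
      have p: "\<phi> n > 0" using pos n by simp
      have "1 / \<phi> n < 1 / C'" using N[OF n'(2)] n'(1) by simp
      then have "\<phi> n > C'" using p unfolding C'_def by (simp add: field_simps)
      then show "\<phi> n > C" unfolding C'_def by simp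
    qed
  qed
  show ?thesis using ae
  proof (eventually_elim)
    case (elim x)
    show ?case
    proof
      assume xi: "x \<in> {0<..<1} \<and> x \<notin> \<rat>"
      then have x: "x \<in> IR" by (simp add: IR_def)
      show "limsup (\<lambda>n. ereal (sE_M n x / \<phi> n)) = 0"
      proof (rule pt_zero[OF pos mono inf x])
        fix m
        show "eventually (\<lambda>n. sE_R (n+2) x \<le> \<phi> (n+2) / real (Suc m)) sequentially"
          using elim[rule_format, of m]
        proof (rule eventually_mono)
          fix n assume "x \<in> space lborel - A m n"
          then have le: "real_of_int (sE_d1 ((sE_T^^Suc n) x)) \<le> r m n * real_of_int (sE_d1 ((sE_T^^n) x))"
            using xi by (auto simp: A_def)
          have p: "real_of_int (sE_d1 ((sE_T^^n) x)) > 0" using IR_d1[OF IR_Tn[OF x, of n]] by simp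
          show "sE_R (n+2) x \<le> \<phi> (n+2) / real (Suc m)"
            unfolding R_succ using le p by (simp add: r_def divide_le_eq mult.commute)
        qed
      qed
    qed
  qed
qed

primrec W :: "(nat \<Rightarrow> real) \<Rightarrow> nat \<Rightarrow> nat \<Rightarrow> real \<Rightarrow> ennreal" where
  "W r 0 n z = 1"
| "W r (Suc L) n z = (if real_of_int (sE_d1 (sE_T z)) \<le> r n * real_of_int (sE_d1 z) then W r L (Suc n) (sE_T z) else 0)"

lemma good_one: "good 1 (\<lambda>_. 1)"
  unfolding good_def by auto

lemma good_W:
  assumes r: "\<And>n. r n \<ge> 1"
  shows "good (\<Prod>i<L. ennreal (1 - 1/(5 * r (n+i)))) (W r L n)"
proof (induction L arbitrary: n)
  case 0
  have "W r 0 n = (\<lambda>_. 1)" by (simp add: fun_eq_iff)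
  then show ?case using good_one by simp
next
  case (Suc L)
  have e: "W r (Suc L) n = (\<lambda>z. if real_of_int (sE_d1 (sE_T z)) \<le> r n * real_of_int (sE_d1 z) then W r L (Suc n) (sE_T z) else 0)"
    by (simp add: fun_eq_iff)
  have "good ((\<Prod>i<L. ennreal (1 - 1/(5 * r (Suc n+i)))) * ennreal (1 - 1/(5 * r n))) (W r (Suc L) n)"
    unfolding e by (rule good_small[OF r Suc.IH])
  moreover have "(\<Prod>i<Suc L. ennreal (1 - 1/(5 * r (n+i)))) = (\<Prod>i<L. ennreal (1 - 1/(5 * r (Suc n+i)))) * ennreal (1 - 1/(5 * r n))"
    by (simp only: prod.lessThan_Suc_shift) (simp add: mult.commute)
  ultimately show ?case by metis
qed

lemma W_orbit:
  "W r L n ((sE_T ^^ n) x) = (if \<forall>i<L. real_of_int (sE_d1 ((sE_T ^^ Suc (n+i)) x)) \<le> r (n+i) * real_of_int (sE_d1 ((sE_T ^^ (n+i)) x)) then 1 else 0)"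
proof (induction L arbitrary: n)
  case 0 then show ?case by simp
next
  case (Suc L)
  have IH: "W r L (Suc n) ((sE_T ^^ Suc n) x) = (if \<forall>i<L. real_of_int (sE_d1 ((sE_T ^^ Suc (Suc n+i)) x)) \<le> r (Suc n+i) * real_of_int (sE_d1 ((sE_T ^^ (Suc n+i)) x)) then 1 else 0)"
    using Suc.IH[of "Suc n"] .
  have eq: "(\<forall>i<Suc L. P i) = (P 0 \<and> (\<forall>i<L. P (Suc i)))" for P :: "nat \<Rightarrow> bool"
    using less_Suc_eq_0_disj by auto
  show ?case using IH by (simp add: eq del: funpow.simps) (simp)
qed

lemma pt_inf:
  fixes \<phi> :: "nat \<Rightarrow> real"
  assumes freq: "\<And>K::nat. \<forall>N. \<exists>n\<ge>N. ereal (sE_M n x / \<phi> n) > ereal (real K)"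
  shows "limsup (\<lambda>n. ereal (sE_M n x / \<phi> n)) = \<infinity>"
proof (rule ccontr)
  assume "limsup (\<lambda>n. ereal (sE_M n x / \<phi> n)) \<noteq> \<infinity>"
  then obtain K::nat where K: "limsup (\<lambda>n. ereal (sE_M n x / \<phi> n)) < ereal (real K)"
    using less_PInf_Ex_of_nat by blast
  have "eventually (\<lambda>n. ereal (real K) > ereal (sE_M n x / \<phi> n)) sequentially"
    using Limsup_le_iff[THEN iffD1, OF order.refl] K by blast
  then obtain N where "\<And>n. n \<ge> N \<Longrightarrow> ereal (real K) > ereal (sE_M n x / \<phi> n)"
    unfolding eventually_sequentially by blast
  moreover obtain n where "n \<ge> N" "ereal (sE_M n x / \<phi> n) > ereal (real K)" using freq[of K] by blast
  ultimately show False by fastforce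
qed




lemma prod_exp_bound:
  fixes p :: "nat \<Rightarrow> real"
  assumes "\<And>i. 0 \<le> p i" "\<And>i. p i \<le> 1"
  shows "(\<Prod>i<L. 1 - p i) \<le> exp (- (\<Sum>i<L. p i))"
proof -
  have "(\<Prod>i<L. 1 - p i) \<le> (\<Prod>i<L. exp (- p i))"
  proof (intro prod_mono conjI)
    fix i
    show "0 \<le> 1 - p i" using assms(2)[of i] by simp
    show "1 - p i \<le> exp (- p i)" using exp_ge_add_one_self[of "- p i"] by simp
  qed
  also have "\<dots> = exp (- (\<Sum>i<L. p i))" by (simp add: exp_sum sum_negf[symmetric])
  finally show ?thesis .
qed

lemma bad_null:
  fixes \<phi> :: "nat \<Rightarrow> real"
  assumes pos: "\<And>n. n \<ge> 1 \<Longrightarrow> \<phi> n > 0"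
    and mono: "\<And>m n. 1 \<le> m \<Longrightarrow> m \<le> n \<Longrightarrow> \<phi> m \<le> \<phi> n"
    and nsum: "\<not> summable (\<lambda>n. 1 / \<phi> (Suc n))"
  defines "r \<equiv> \<lambda>(K::nat) n. max 1 (real K * \<phi> (n+2))"
  shows "{x \<in> {0<..<1::real}. \<forall>i. real_of_int (sE_d1 ((sE_T ^^ Suc (N+i)) x)) \<le> r K (N+i) * real_of_int (sE_d1 ((sE_T ^^ (N+i)) x))}
         \<in> null_sets lborel"
proof -
  let ?B = "{x \<in> {0<..<1::real}. \<forall>i. real_of_int (sE_d1 ((sE_T ^^ Suc (N+i)) x)) \<le> r K (N+i) * real_of_int (sE_d1 ((sE_T ^^ (N+i)) x))}"
  have Bm[measurable]: "?B \<in> sets lborel" unfolding r_def by measurable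
  define p where "p n = 1 / (5 * r K n)" for n
  have r1: "\<And>n. r K n \<ge> 1" unfolding r_def by simp
  have p01: "0 \<le> p n" "p n \<le> 1" for n using r1[of n] by (auto simp: p_def field_simps)
  have bound: "emeasure lborel ?B \<le> ennreal (exp (- (\<Sum>i<L. p (N+i))))" for L
  proof -
    have "emeasure lborel ?B = (\<integral>\<^sup>+x. indicator ?B x \<partial>lborel)"
      by (rule nn_integral_indicator[symmetric]) (rule Bm)
    also have "\<dots> \<le> (\<integral>\<^sup>+x. W (r K) L N ((sE_T ^^ N) x) * indicator {0<..<1} x \<partial>lborel)"
    proof (intro nn_integral_mono)
      fix x
      show "indicator ?B x \<le> W (r K) L N ((sE_T ^^ N) x) * indicator {0<..<1} x"
      proof (cases "x \<in> ?B")
        case True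
        then have "W (r K) L N ((sE_T ^^ N) x) = 1" by (simp only: W_orbit) auto
        then show ?thesis using True by simp
      next
        case False
        then show ?thesis by simp
      qed
    qed
    also have "\<dots> \<le> (\<Prod>i<L. ennreal (1 - 1/(5 * r K (N+i))))"
      by (rule good_unit[OF good_Tn[OF good_W[OF r1]]])
    also have "\<dots> = ennreal (\<Prod>i<L. 1 - p (N+i))"
      using p01 by (subst prod_ennreal) (auto simp: p_def)
    also have "\<dots> \<le> ennreal (exp (- (\<Sum>i<L. p (N+i))))"
      using p01 by (intro ennreal_leI prod_exp_bound) auto
    finally show ?thesis .
  qed
  have c0: "\<phi> 1 > 0" using pos[of 1] by simp
  define D where "D = 1 / \<phi> 1 + real K"
  have Dp: "D > 0"
  proof -
    have "0 < 1 / \<phi> 1" using c0 by simp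
    moreover have "0 \<le> real K" by simp
    ultimately show ?thesis unfolding D_def by linarith
  qed
  define c where "c = 1 / (5 * D)"
  have cpos: "c > 0" unfolding c_def using Dp by simp
  have plow: "c * (1 / \<phi> (Suc (Suc n))) \<le> p n" for n
  proof -
    have pn: "\<phi> (n+2) > 0" using pos by simp
    have "\<phi> 1 \<le> \<phi> (n+2)" using mono[of 1 "n+2"] by simp
    then have h1: "1 \<le> \<phi> (n+2) / \<phi> 1" using c0 by (simp add: le_divide_eq)
    have h2: "0 \<le> real K * \<phi> (n+2)" using pn by simp
    have e: "\<phi> (n+2) * D = \<phi> (n+2) / \<phi> 1 + real K * \<phi> (n+2)"
      unfolding D_def by (simp add: algebra_simps)
    have rle: "r K n \<le> \<phi> (n+2) * D"
      unfolding r_def e using h1 h2 by (simp add: max_def)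
    have "1 / (5 * (\<phi> (n+2) * D)) \<le> 1 / (5 * r K n)"
    proof (rule divide_left_mono)
      show "5 * r K n \<le> 5 * (\<phi> (n+2) * D)" using rle by simp
      show "0 < 5 * (\<phi> (n+2) * D) * (5 * r K n)" using pn Dp r1[of n] by simp
    qed simp
    moreover have "c * (1 / \<phi> (Suc (Suc n))) = 1 / (5 * (\<phi> (n+2) * D))"
      unfolding c_def by simp
    ultimately show ?thesis unfolding p_def by simp
  qed
  have nsp: "\<not> summable (\<lambda>i. p (N+i))"
  proof
    assume a: "summable (\<lambda>i. p (N+i))"
    have e: "(\<lambda>i. p (N+i)) = (\<lambda>n. p (n+N))" by (simp add: add.commute)
    have sp: "summable p" using a unfolding e by (rule summable_iff_shift[THEN iffD1])
    have "summable (\<lambda>n. c * (1 / \<phi> (Suc (Suc n))))"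
    proof (rule summable_comparison_test'[OF sp, where N=0])
      fix n :: nat
      have "0 \<le> c * (1 / \<phi> (Suc (Suc n)))" using cpos pos[of "Suc (Suc n)"] by simp
      then show "norm (c * (1 / \<phi> (Suc (Suc n)))) \<le> p n"
        using plow[of n] by simp
    qed
    then have "c = 0 \<or> summable (\<lambda>n. 1 / \<phi> (Suc (Suc n)))" by (rule summable_cmult_iff[THEN iffD1])
    then have "summable (\<lambda>n. 1 / \<phi> (Suc (Suc n)))" using cpos by simp
    then have "summable (\<lambda>n. 1 / \<phi> (Suc n))" by (rule summable_Suc_iff[THEN iffD1])
    then show False using nsum by simp
  qed
  have big: "\<exists>L. (\<Sum>i<L. p (N+i)) > M" for M
  proof (rule ccontr)
    assume a: "\<not> (\<exists>L. (\<Sum>i<L. p (N+i)) > M)"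
    have "summable (\<lambda>i. p (N+i))"
    proof (rule summableI_nonneg_bounded[where x=M])
      show "0 \<le> p (N+i)" for i using p01 by simp
      show "(\<Sum>i<L. p (N+i)) \<le> M" for L using a by (simp add: not_less)
    qed
    then show False using nsp by simp
  qed
  have "emeasure lborel ?B \<le> 0"
  proof (rule ennreal_le_epsilon)
    fix e :: real assume e: "0 < e"
    obtain L where L: "(\<Sum>i<L. p (N+i)) > - ln e" using big by blast
    have "exp (- (\<Sum>i<L. p (N+i))) \<le> exp (ln e)" using L by simp
    then have "exp (- (\<Sum>i<L. p (N+i))) \<le> e" using e by simp
    then have "ennreal (exp (- (\<Sum>i<L. p (N+i)))) \<le> ennreal e" by (rule ennreal_leI)
    with bound[of L] show "emeasure lborel ?B \<le> 0 + ennreal e" by simp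
  qed
  then show ?thesis using Bm by (simp add: null_sets_def)
qed



lemma part2:
  fixes \<phi> :: "nat \<Rightarrow> real"
  assumes pos: "\<And>n. n \<ge> 1 \<Longrightarrow> \<phi> n > 0"
    and mono: "\<And>m n. 1 \<le> m \<Longrightarrow> m \<le> n \<Longrightarrow> \<phi> m \<le> \<phi> n"
    and nsum: "\<not> summable (\<lambda>n. 1 / \<phi> (Suc n))"
  shows "AE x in lborel. x \<in> {0<..<1} \<and> x \<notin> \<rat> \<longrightarrow>
               limsup (\<lambda>n. ereal (sE_M n x / \<phi> n)) = \<infinity>"
proof -
  define r where "r = (\<lambda>(K::nat) n. max 1 (real K * \<phi> (n+2)))"
  define B where "B K N = {x \<in> {0<..<1::real}. \<forall>i. real_of_int (sE_d1 ((sE_T ^^ Suc (N+i)) x)) \<le> r K (N+i) * real_of_int (sE_d1 ((sE_T ^^ (N+i)) x))}" for K N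
  have null: "B K N \<in> null_sets lborel" for K N
    unfolding B_def r_def by (rule bad_null[OF pos mono nsum])
  have "\<forall>K N. AE x in lborel. x \<notin> B K N" using null by (simp add: AE_not_in)
  then have ae: "AE x in lborel. \<forall>K N. x \<notin> B K N" by (simp add: AE_all_countable)
  show ?thesis using ae
  proof (eventually_elim)
    case (elim x)
    show ?case
    proof
      assume xi: "x \<in> {0<..<1} \<and> x \<notin> \<rat>"
      then have x: "x \<in> IR" by (simp add: IR_def)
      show "limsup (\<lambda>n. ereal (sE_M n x / \<phi> n)) = \<infinity>"
      proof (rule pt_inf)
        fix K :: nat
        show "\<forall>N. \<exists>n\<ge>N. ereal (sE_M n x / \<phi> n) > ereal (real K)"
        proof
          fix N
          have "x \<notin> B K N" using elim by blast
          then obtain i where i: "\<not> (real_of_int (sE_d1 ((sE_T ^^ Suc (N+i)) x)) \<le> r K (N+i) * real_of_int (sE_d1 ((sE_T ^^ (N+i)) x)))"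
            using xi unfolding B_def by auto
          define j where "j = N + i"
          have gt: "real_of_int (sE_d1 ((sE_T ^^ Suc j) x)) > r K j * real_of_int (sE_d1 ((sE_T ^^ j) x))"
            using i unfolding j_def by simp
          have p: "real_of_int (sE_d1 ((sE_T^^j) x)) > 0" using IR_d1[OF IR_Tn[OF x, of j]] by simp
          have R: "sE_R (j+2) x > r K j"
            unfolding R_succ using gt p by (simp add: pos_less_divide_eq)
          have rK: "r K j \<ge> real K * \<phi> (j+2)" unfolding r_def by simp
          have M: "sE_M (j+2) x \<ge> sE_R (j+2) x" by (rule M_ge) auto
          have ph: "\<phi> (j+2) > 0" using pos by simp
          have "sE_M (j+2) x > real K * \<phi> (j+2)" using R rK M by linarith
          then have "sE_M (j+2) x / \<phi> (j+2) > real K" using ph by (simp add: pos_less_divide_eq)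
          moreover have "j + 2 \<ge> N" unfolding j_def by simp
          ultimately show "\<exists>n\<ge>N. ereal (sE_M n x / \<phi> n) > ereal (real K)" by auto
        qed
      qed
    qed
  qed
qed

theorem corollary1p6:
  fixes \<phi> :: "nat \<Rightarrow> real"
  assumes pos: "\<And>n. n \<ge> 1 \<Longrightarrow> \<phi> n > 0"
    and mono: "\<And>m n. 1 \<le> m \<Longrightarrow> m \<le> n \<Longrightarrow> \<phi> m \<le> \<phi> n"
  shows "(summable (\<lambda>n. 1 / \<phi> (Suc n)) \<longrightarrow>
            (AE x in lborel. x \<in> {0<..<1} \<and> x \<notin> \<rat> \<longrightarrow>
               limsup (\<lambda>n. ereal (sE_M n x / \<phi> n)) = 0))
       \<and> (\<not> summable (\<lambda>n. 1 / \<phi> (Suc n)) \<longrightarrow>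
            (AE x in lborel. x \<in> {0<..<1} \<and> x \<notin> \<rat> \<longrightarrow>
               limsup (\<lambda>n. ereal (sE_M n x / \<phi> n)) = \<infinity>))"
proof (intro conjI impI)
  assume s: "summable (\<lambda>n. 1 / \<phi> (Suc n))"
  show "AE x in lborel. x \<in> {0<..<1} \<and> x \<notin> \<rat> \<longrightarrow>
               limsup (\<lambda>n. ereal (sE_M n x / \<phi> n)) = 0"
    by (rule part1[OF pos mono s])
next
  assume s: "\<not> summable (\<lambda>n. 1 / \<phi> (Suc n))"
  show "AE x in lborel. x \<in> {0<..<1} \<and> x \<notin> \<rat> \<longrightarrow>
               limsup (\<lambda>n. ereal (sE_M n x / \<phi> n)) = \<infinity>"
    by (rule part2[OF pos mono s])
qed

end
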